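(* Let $m\in\mathbb{N}$, $A=\langle a\rangle\le\mathrm{Sym}(3)$ with $a=(1\,2\,3)$, $B=(\mathbb{Z}/3\mathbb{Z})^m$, and let $\omega=\omega_0\omega_1\omega_2\dots$ be a sequence of epimorphisms $\omega_i\colon B\to A$ with $\bigcap_{i\ge k}\ker(\omega_i)=\{1\}$ for every $k\in\mathbb{N}$. Let $l\in\mathbb{N}$ be the smallest integer such that $\bigcap_{i=0}^{l}\ker(\omega_i)=\{1\}$. Then there exists a constant $C_l\in\mathbb{N}$ such that $|\mathcal{I}_\infty^\omega(n)|\le C_l\, n^{\frac{3^{l+2}-1}{2}}$ for all integers $n\ge 1$.
   Context: $T_3$ is the $3$-regular rooted tree; elements of $\mathrm{Sym}(3)$ act as rooted automorphisms $\tau(xw)=\tau(x)w$; for $g$ fixing the first level, $g=(g_1,g_2,g_3)$ lists the restrictions of $g$ to the three subtrees below the root, and every $g\in\mathrm{Aut}(T_3)$ is uniquely $g=(g_1,g_2,g_3)\tau$ with $\tau\in\mathrm{Sym}(3)$. Let $\sigma$ be the left shift on sequences. Define recursively $\beta_\omega\colon B\to\mathrm{Aut}(T_3)$ by $\beta_\omega(b)=(\omega_0(b),1,\beta_{\sigma(\omega)}(b))$, let $B_\omega=\beta_\omega(B)$ and $G_\omega=\langle A,B_\omega\rangle$. Equip $G_\omega$ with the word pseudonorm $|\cdot|_\omega$: $|g|_\omega$ is the minimum of $\sum_i|s_i|$ over all expressions $g=s_1\cdots s_k$ with $s_i\in A\cup B_\omega$, where elements of $A$ have length $0$ and nontrivial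 elements of $B_\omega$ have length $1$. Every $g\in G_{\sigma^\nu(\omega)}$ can be written $g=(g_1,g_2,g_3)\tau$ with $g_i\in G_{\sigma^{\nu+1}(\omega)}$, $\tau\in A$. Incompressible elements: set $\mathcal{I}_0^{\sigma^\nu(\omega)}=G_{\sigma^\nu(\omega)}$ and recursively $\mathcal{I}_k^{\sigma^\nu(\omega)}$ is the set of $g=(g_1,g_2,g_3)\tau\in G_{\sigma^\nu(\omega)}$ with $g_1,g_2,g_3\in\mathcal{I}_{k-1}^{\sigma^{\nu+1}(\omega)}$ and $\sum_{i=1}^3|g_i|_{\sigma^{\nu+1}(\omega)}=|g|_{\sigma^\nu(\omega)}$; then $\mathcal{I}_\infty^\omega=\bigcap_{k\ge1}\mathcal{I}_k^\omega$, and $\mathcal{I}_\infty^\omega(n)$ is the set of elements of $\mathcal{I}_\infty^\omega$ of length $|\cdot|_\omega$ equal to $n$. *)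

theory Defs
  imports Main
begin

(* Vertices of the 3-regular rooted tree T_3: words over the alphabet {0,1,2}
   (the paper's letters 1,2,3 are relabelled 0,1,2).  Automorphisms are
   represented as functions on words (letters >= 3 are fixed, irrelevant). *)

(* A = <a>, a = (1 2 3), realised on {0,1,2} as x |-> x+1 mod 3 *)
definition rot :: "nat \<Rightarrow> nat \<Rightarrow> nat" where
  "rot k x = (if x < 3 then (x + k) mod 3 else x)"

definition A_set :: "(nat \<Rightarrow> nat) set" where
  "A_set = {rot 0, rot 1, rot 2}"

definition B_set :: "nat \<Rightarrow> (nat \<Rightarrow> nat) set" where
  "B_set m = {b. \<forall>i. b i < 3 \<and> (m \<le> i \<longrightarrow> b i = 0)}"

definition badd :: "(nat \<Rightarrow> nat) \<Rightarrow> (nat \<Rightarrow> nat) \<Rightarrow> (nat \<Rightarrow> nat)" where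
  "badd b c = (\<lambda>i. (b i + c i) mod 3)"

definition bzero :: "nat \<Rightarrow> nat" where
  "bzero = (\<lambda>_. 0)"

definition epi :: "nat \<Rightarrow> ((nat \<Rightarrow> nat) \<Rightarrow> (nat \<Rightarrow> nat)) \<Rightarrow> bool" where
  "epi m f \<longleftrightarrow> (\<forall>b\<in>B_set m. \<forall>c\<in>B_set m. f (badd b c) = f b \<circ> f c)
                 \<and> f ` B_set m = A_set"

definition kern :: "nat \<Rightarrow> ((nat \<Rightarrow> nat) \<Rightarrow> (nat \<Rightarrow> nat)) \<Rightarrow> (nat \<Rightarrow> nat) set" where
  "kern m f = {b \<in> B_set m. f b = id}"

definition shift :: "(nat \<Rightarrow> 'a) \<Rightarrow> nat \<Rightarrow> 'a" where
  "shift \<omega> = (\<lambda>i. \<omega> (Suc i))"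

fun rooted :: "(nat \<Rightarrow> nat) \<Rightarrow> nat list \<Rightarrow> nat list" where
  "rooted \<tau> [] = []"
| "rooted \<tau> (y # w) = \<tau> y # w"

fun beta :: "(nat \<Rightarrow> (nat \<Rightarrow> nat) \<Rightarrow> (nat \<Rightarrow> nat)) \<Rightarrow> (nat \<Rightarrow> nat) \<Rightarrow> nat list \<Rightarrow> nat list" where
  "beta \<omega> b [] = []"
| "beta \<omega> b (x # w) =
     (if x = 0 then 0 # rooted (\<omega> 0 b) w
      else if x = 1 then 1 # w
      else if x = 2 then 2 # beta (shift \<omega>) b w
      else x # w)"

definition B_om :: "nat \<Rightarrow> (nat \<Rightarrow> (nat \<Rightarrow> nat) \<Rightarrow> (nat \<Rightarrow> nat)) \<Rightarrow> (nat list \<Rightarrow> nat list) set" where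
  "B_om m \<omega> = beta \<omega> ` B_set m"

definition gens :: "nat \<Rightarrow> (nat \<Rightarrow> (nat \<Rightarrow> nat) \<Rightarrow> (nat \<Rightarrow> nat)) \<Rightarrow> (nat list \<Rightarrow> nat list) set" where
  "gens m \<omega> = rooted ` A_set \<union> B_om m \<omega>"

definition gweight :: "(nat list \<Rightarrow> nat list) \<Rightarrow> nat" where
  "gweight s = (if s \<in> rooted ` A_set then 0 else 1)"

definition G_om :: "nat \<Rightarrow> (nat \<Rightarrow> (nat \<Rightarrow> nat) \<Rightarrow> (nat \<Rightarrow> nat)) \<Rightarrow> (nat list \<Rightarrow> nat list) set" where
  "G_om m \<omega> = {foldr (\<circ>) ss id | ss. set ss \<subseteq> gens m \<omega>}"

definition wlen :: "nat \<Rightarrow> (nat \<Rightarrow> (nat \<Rightarrow> nat) \<Rightarrow> (nat \<Rightarrow> nat)) \<Rightarrow> (nat list \<Rightarrow> nat list) \<Rightarrow> nat" where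
  "wlen m \<omega> g = (LEAST n. \<exists>ss. set ss \<subseteq> gens m \<omega> \<and> foldr (\<circ>) ss id = g
                               \<and> sum_list (map gweight ss) = n)"

definition sec :: "(nat list \<Rightarrow> nat list) \<Rightarrow> nat \<Rightarrow> nat list \<Rightarrow> nat list" where
  "sec g x = (\<lambda>w. tl (g (x # w)))"

fun Inc :: "nat \<Rightarrow> nat \<Rightarrow> (nat \<Rightarrow> (nat \<Rightarrow> nat) \<Rightarrow> (nat \<Rightarrow> nat)) \<Rightarrow> (nat list \<Rightarrow> nat list) set" where
  "Inc m 0 \<omega> = G_om m \<omega>"
| "Inc m (Suc k) \<omega> =
     {g \<in> G_om m \<omega>. (\<forall>x<3. sec g x \<in> Inc m k (shift \<omega>))
        \<and> (\<Sum>x<3. wlen m (shift \<omega>) (sec g x)) = wlen m \<omega> g}"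

definition Inc_inf :: "nat \<Rightarrow> (nat \<Rightarrow> (nat \<Rightarrow> nat) \<Rightarrow> (nat \<Rightarrow> nat)) \<Rightarrow> (nat list \<Rightarrow> nat list) set" where
  "Inc_inf m \<omega> = (\<Inter>k\<in>{1..}. Inc m k \<omega>)"

definition Inc_inf_n :: "nat \<Rightarrow> (nat \<Rightarrow> (nat \<Rightarrow> nat) \<Rightarrow> (nat \<Rightarrow> nat)) \<Rightarrow> nat \<Rightarrow> (nat list \<Rightarrow> nat list) set" where
  "Inc_inf_n m \<omega> n = {g \<in> Inc_inf m \<omega>. wlen m \<omega> g = n}"

end

theory Submission
  imports Defs
begin


datatype letter = LA nat | LB "nat \<Rightarrow> nat"

definition hat :: "((nat \<Rightarrow> nat) \<Rightarrow> (nat \<Rightarrow> nat)) \<Rightarrow> (nat \<Rightarrow> nat) \<Rightarrow> nat" where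
  "hat f b = (SOME k. k < 3 \<and> f b = rot k)"

fun ev :: "(nat \<Rightarrow> (nat \<Rightarrow> nat) \<Rightarrow> (nat \<Rightarrow> nat)) \<Rightarrow> letter \<Rightarrow> nat list \<Rightarrow> nat list" where
  "ev \<omega> (LA a) = rooted (rot a)"
| "ev \<omega> (LB b) = beta \<omega> b"

definition evw where "evw \<omega> w = foldr (\<circ>) (map (ev \<omega>) w) id"

fun tot :: "letter list \<Rightarrow> nat" where
  "tot [] = 0" | "tot (LA a # w) = a + tot w" | "tot (LB b # w) = tot w"

fun secl where
  "secl \<omega> (LA a) (y::nat) = []"
| "secl \<omega> (LB b) (y::nat) = (if y = 0 then [LA (hat (\<omega> 0) b)] else if y = 2 then [LB b] else [])"

fun secw where
  "secw \<omega> [] x = []"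
| "secw \<omega> (s # w) x = secl \<omega> s ((x + tot w) mod 3) @ secw \<omega> w x"

fun wfl where "wfl m (LA a) = (a < 3)" | "wfl m (LB b) = (b \<in> B_set m)"

definition wfw where "wfw m w = (\<forall>l\<in>set w. wfl m l)"

lemma rot_lt: "x < 3 \<Longrightarrow> rot a x < 3" by (simp add: rot_def)

lemma rot_comp: "rot i \<circ> rot j = rot (i + j)"
proof (rule ext)
  fix x
  have "(i + (x + j) mod 3) mod 3 = (i + (x + j)) mod 3" by (rule mod_add_right_eq)
  then show "(rot i \<circ> rot j) x = rot (i + j) x" by (simp add: rot_def algebra_simps)
qed

lemma rot_mod: "rot (a mod 3) = rot a"
  by (rule ext) (simp add: rot_def mod_add_right_eq)

lemma rot0: "rot 0 = id"
  by (rule ext) (simp add: rot_def)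

lemma rot_eq_iff: "rot i = rot j \<longleftrightarrow> i mod 3 = j mod 3"
proof
  assume "rot i = rot j" then have "rot i 0 = rot j 0" by simp
  then show "i mod 3 = j mod 3" by (simp add: rot_def)
next
  assume "i mod 3 = j mod 3" then show "rot i = rot j" by (metis rot_mod)
qed

lemma rooted_comp: "rooted (f \<circ> g) = rooted f \<circ> rooted g"
proof (rule ext)
  fix w show "rooted (f \<circ> g) w = (rooted f \<circ> rooted g) w" by (cases w) auto
qed

lemma rooted_id: "rooted id = id"
proof (rule ext)
  fix w show "rooted id w = id w" by (cases w) auto
qed

lemma epiD: assumes "epi m f" "b \<in> B_set m" shows "\<exists>k<3. f b = rot k"
proof -
  have "f b \<in> A_set" using assms unfolding epi_def by blast
  then have "f b = rot 0 \<or> f b = rot 1 \<or> f b = rot 2" by (simp add: A_set_def)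
  then show ?thesis
  proof (elim disjE)
    assume "f b = rot 0" then show ?thesis by (intro exI[where x=0]) simp
  next
    assume "f b = rot 1" then show ?thesis by (intro exI[where x=1]) simp
  next
    assume "f b = rot 2" then show ?thesis by (intro exI[where x=2]) simp
  qed
qed

lemma hat: assumes "epi m f" "b \<in> B_set m" shows "hat f b < 3" "f b = rot (hat f b)"
proof -
  have "\<exists>k. k<3 \<and> f b = rot k" using epiD[OF assms] by blast
  from someI_ex[OF this] show "hat f b < 3" "f b = rot (hat f b)" unfolding hat_def by auto
qed

lemma evw_Nil[simp]: "evw \<omega> [] = id" by (simp add: evw_def)
lemma evw_Cons[simp]: "evw \<omega> (s # w) = ev \<omega> s \<circ> evw \<omega> w" by (simp add: evw_def)
lemma evw_append: "evw \<omega> (u @ v) = evw \<omega> u \<circ> evw \<omega> v"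
  by (induction u) auto

lemma shift_app: "shift \<omega> i = \<omega> (Suc i)" by (simp add: shift_def)

lemma sem_letter:
  assumes "\<forall>i. epi m (\<omega> i)" "wfl m s" "x < 3"
  shows "ev \<omega> s (x # u) = ((x + tot [s]) mod 3) # evw (shift \<omega>) (secl \<omega> s x) u"
proof (cases s)
  case (LA a) then show ?thesis using assms by (simp add: rot_def add.commute)
next
  case (LB b)
  then have b: "b \<in> B_set m" using assms by simp
  have "x = 0 \<or> x = 1 \<or> x = 2" using assms by auto
  then show ?thesis using LB hat(2)[OF _ b, of "\<omega> 0"] assms(1) by (auto simp: shift_app)
qed

lemma sem_word:
  assumes "\<forall>i. epi m (\<omega> i)" "wfw m w" "x < 3"
  shows "evw \<omega> w (x # u) = ((x + tot w) mod 3) # evw (shift \<omega>) (secw \<omega> w x) u"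
  using assms(2)
proof (induction w arbitrary: u)
  case Nil then show ?case using assms by simp
next
  case (Cons s w)
  have ws: "wfl m s" "wfw m w" using Cons.prems by (auto simp: wfw_def)
  have y: "(x + tot w) mod 3 < 3" by simp
  have "evw \<omega> (s # w) (x # u) = ev \<omega> s (((x + tot w) mod 3) # evw (shift \<omega>) (secw \<omega> w x) u)"
    using Cons.IH[OF ws(2)] by simp
  also have "\<dots> = (((x + tot w) mod 3 + tot [s]) mod 3) # evw (shift \<omega>) (secl \<omega> s ((x + tot w) mod 3)) (evw (shift \<omega>) (secw \<omega> w x) u)"
    using sem_letter[OF assms(1) ws(1) y] by simp
  also have "\<dots> = ((x + tot (s # w)) mod 3) # evw (shift \<omega>) (secw \<omega> (s # w) x) u"
    by (cases s) (simp_all add: evw_append mod_add_left_eq mod_add_right_eq add.commute add.left_commute)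
  finally show ?case .
qed

lemma sec_evw:
  assumes "\<forall>i. epi m (\<omega> i)" "wfw m w" "x < 3"
  shows "sec (evw \<omega> w) x = evw (shift \<omega>) (secw \<omega> w x)"
  unfolding sec_def using sem_word[OF assms] by auto

lemma bzero_B[simp]: "bzero \<in> B_set m" by (simp add: B_set_def bzero_def)

lemma badd_B: "b \<in> B_set m \<Longrightarrow> c \<in> B_set m \<Longrightarrow> badd b c \<in> B_set m"
  by (simp add: B_set_def badd_def)

lemma epi_hom: "epi m f \<Longrightarrow> b \<in> B_set m \<Longrightarrow> c \<in> B_set m \<Longrightarrow> f (badd b c) = f b \<circ> f c"
  by (simp add: epi_def)

lemma badd_zero: "badd bzero bzero = bzero" by (simp add: badd_def bzero_def)

lemma epi_zero: assumes "epi m f" shows "f bzero = id"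
proof -
  obtain k where k: "k < 3" "f bzero = rot k" using epiD[OF assms bzero_B] by blast
  have "f bzero = f bzero \<circ> f bzero" using epi_hom[OF assms bzero_B bzero_B] badd_zero by simp
  then have "rot k = rot (k + k)" using k rot_comp by simp
  then have "k mod 3 = (k + k) mod 3" by (simp add: rot_eq_iff)
  moreover have "k = 0 \<or> k = 1 \<or> k = 2" using k(1) by auto
  ultimately have "k = 0" by auto
  then show ?thesis using k rot0 by simp
qed

lemma epis_shift: "\<forall>i. epi m (\<omega> i) \<Longrightarrow> \<forall>i. epi m (shift \<omega> i)"
  by (simp add: shift_app)

lemma beta_zero: "\<forall>i. epi m (\<omega> i) \<Longrightarrow> beta \<omega> bzero = id"
proof
  fix w
  show "\<forall>i. epi m (\<omega> i) \<Longrightarrow> beta \<omega> bzero w = id w"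
  proof (induction w arbitrary: \<omega>)
    case Nil then show ?case by simp
  next
    case (Cons x w)
    have z: "\<omega> 0 bzero = id" using epi_zero Cons.prems by blast
    have "beta (shift \<omega>) bzero w = w" using Cons.IH[OF epis_shift[OF Cons.prems]] by simp
    then show ?case using z rooted_id by simp
  qed
qed

lemma beta_hom:
  assumes "\<forall>i. epi m (\<omega> i)" "b \<in> B_set m" "c \<in> B_set m"
  shows "beta \<omega> (badd b c) = beta \<omega> b \<circ> beta \<omega> c"
proof
  fix w
  show "beta \<omega> (badd b c) w = (beta \<omega> b \<circ> beta \<omega> c) w"
    using assms(1)
  proof (induction w arbitrary: \<omega>)
    case Nil then show ?case by simp
  next
    case (Cons x w)
    have z: "\<omega> 0 (badd b c) = \<omega> 0 b \<circ> \<omega> 0 c" using epi_hom Cons.prems assms(2,3) by blast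
    have "beta (shift \<omega>) (badd b c) w = beta (shift \<omega>) b (beta (shift \<omega>) c w)"
      using Cons.IH[OF epis_shift[OF Cons.prems]] by simp
    then show ?case using z rooted_comp by simp
  qed
qed

lemma beta_path: "beta \<omega> b (replicate i 2 @ [0, y]) = replicate i 2 @ [0, \<omega> i b y]"
proof (induction i arbitrary: \<omega>)
  case 0 then show ?case by simp
next
  case (Suc i) then show ?case by (simp add: shift_app)
qed

lemma rooted_last: "length xs \<ge> 2 \<Longrightarrow> last (rooted \<tau> xs) = last xs"
  by (cases xs) auto

lemma beta_notA:
  assumes "\<forall>i. epi m (\<omega> i)" "b \<in> B_set m" "\<omega> i b \<noteq> id"
  shows "beta \<omega> b \<notin> rooted ` A_set"
proof
  assume "beta \<omega> b \<in> rooted ` A_set"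
  then obtain \<tau> where t: "beta \<omega> b = rooted \<tau>" by blast
  obtain k where k: "k < 3" "\<omega> i b = rot k" using epiD assms by blast
  have k0: "k \<noteq> 0" using k assms(3) rot0 by auto
  let ?xs = "replicate i 2 @ [0, 0::nat]"
  have "last (beta \<omega> b ?xs) = \<omega> i b 0" by (simp add: beta_path)
  also have "\<dots> = k" using k by (simp add: rot_def)
  finally have "last (rooted \<tau> ?xs) = k" using t by simp
  moreover have "last (rooted \<tau> ?xs) = 0" by (subst rooted_last) auto
  ultimately show False using k0 by simp
qed

definition wt :: "letter \<Rightarrow> nat" where
  "wt l = (case l of LA a \<Rightarrow> 0 | LB b \<Rightarrow> if b = bzero then 0 else 1)"

definition wtw :: "letter list \<Rightarrow> nat" where "wtw w = sum_list (map wt w)"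

lemma wtw_simps[simp]: "wtw [] = 0" "wtw (s # w) = wt s + wtw w" "wtw (u @ v) = wtw u + wtw v"
  by (simp_all add: wtw_def)

lemma wt_simps[simp]: "wt (LA a) = 0" "wt (LB b) = (if b = bzero then 0 else 1)"
  by (simp_all add: wt_def)

lemma rooted_rot_A: "rooted (rot a) \<in> rooted ` A_set"
proof -
  have "a mod 3 = 0 \<or> a mod 3 = 1 \<or> a mod 3 = 2" by presburger
  then have "rot (a mod 3) \<in> A_set" unfolding A_set_def by auto
  then show ?thesis using rot_mod by (metis image_eqI)
qed

lemma id_A: "id \<in> rooted ` A_set"
  using rooted_rot_A[of 0] rot0 rooted_id by simp

lemma ev_gens: "wfl m l \<Longrightarrow> ev \<omega> l \<in> gens m \<omega>"
  by (cases l) (auto simp: gens_def B_om_def rooted_rot_A)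

lemma gweight_le:
  assumes "\<forall>i. epi m (\<omega> i)" "wfl m l" shows "gweight (ev \<omega> l) \<le> wt l"
proof (cases l)
  case (LA a) then show ?thesis by (simp add: gweight_def rooted_rot_A)
next
  case (LB b) then show ?thesis using beta_zero[OF assms(1)] id_A by (auto simp: gweight_def)
qed

lemma gweight_eq:
  assumes "\<forall>i. epi m (\<omega> i)" "\<forall>b\<in>B_set m. b \<noteq> bzero \<longrightarrow> (\<exists>i. \<omega> i b \<noteq> id)" "wfl m l"
  shows "gweight (ev \<omega> l) = wt l"
proof (cases l)
  case (LA a) then show ?thesis by (simp add: gweight_def rooted_rot_A)
next
  case (LB b)
  show ?thesis
  proof (cases "b = bzero")
    case True then show ?thesis using LB beta_zero[OF assms(1)] id_A by (auto simp: gweight_def)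
  next
    case False
    then obtain i where "\<omega> i b \<noteq> id" using assms(2,3) LB by auto
    then have "beta \<omega> b \<notin> rooted ` A_set" using beta_notA assms LB by auto
    then show ?thesis using LB False by (simp add: gweight_def)
  qed
qed

lemma wlen_le:
  assumes "\<forall>i. epi m (\<omega> i)" "wfw m w" shows "wlen m \<omega> (evw \<omega> w) \<le> wtw w"
proof -
  let ?ss = "map (ev \<omega>) w"
  have "set ?ss \<subseteq> gens m \<omega>" using assms(2) ev_gens by (auto simp: wfw_def)
  then have "wlen m \<omega> (evw \<omega> w) \<le> sum_list (map gweight ?ss)"
    unfolding wlen_def evw_def by (intro Least_le) blast
  also have "\<dots> \<le> wtw w" unfolding wtw_def map_map
    by (rule sum_list_mono) (use gweight_le assms in \<open>auto simp: wfw_def\<close>)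
  finally show ?thesis .
qed

lemma lift_word: "\<forall>s\<in>set ss. s \<in> gens m \<omega> \<Longrightarrow> \<exists>w. wfw m w \<and> map (ev \<omega>) w = ss"
proof (induction ss)
  case Nil then show ?case by (simp add: wfw_def)
next
  case (Cons s ss)
  then obtain w where w: "wfw m w" "map (ev \<omega>) w = ss" by auto
  have "s \<in> gens m \<omega>" using Cons.prems by simp
  then have "\<exists>l. wfl m l \<and> ev \<omega> l = s"
  proof (unfold gens_def, elim UnE)
    assume "s \<in> rooted ` A_set"
    then have "s = rooted (rot 0) \<or> s = rooted (rot 1) \<or> s = rooted (rot 2)" unfolding A_set_def by auto
    then show ?thesis
    proof (elim disjE)
      assume "s = rooted (rot 0)" then show ?thesis by (intro exI[where x="LA 0"]) simp
    next
      assume "s = rooted (rot 1)" then show ?thesis by (intro exI[where x="LA 1"]) simp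
    next
      assume "s = rooted (rot 2)" then show ?thesis by (intro exI[where x="LA 2"]) simp
    qed
  next
    assume "s \<in> B_om m \<omega>"
    then obtain b where "b \<in> B_set m" "s = beta \<omega> b" unfolding B_om_def by auto
    then show ?thesis by (intro exI[where x="LB b"]) simp
  qed
  then obtain l where "wfl m l" "ev \<omega> l = s" by blast
  then show ?case using w by (intro exI[where x="l # w"]) (simp add: wfw_def)
qed

lemma root_word:
  assumes "\<forall>i. epi m (\<omega> i)" "\<forall>b\<in>B_set m. b \<noteq> bzero \<longrightarrow> (\<exists>i. \<omega> i b \<noteq> id)" "g \<in> G_om m \<omega>"
  shows "\<exists>w. wfw m w \<and> evw \<omega> w = g \<and> wtw w = wlen m \<omega> g"
proof -
  let ?P = "\<lambda>n. \<exists>ss. set ss \<subseteq> gens m \<omega> \<and> foldr (\<circ>) ss id = g \<and> sum_list (map gweight ss) = n"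
  obtain ss0 where "set ss0 \<subseteq> gens m \<omega>" "foldr (\<circ>) ss0 id = g" using assms(3) unfolding G_om_def by blast
  then have "\<exists>n. ?P n" by blast
  then have "?P (LEAST n. ?P n)" by (rule LeastI_ex)
  then have "?P (wlen m \<omega> g)" unfolding wlen_def .
  then obtain ss where ss: "set ss \<subseteq> gens m \<omega>" "foldr (\<circ>) ss id = g"
     "sum_list (map gweight ss) = wlen m \<omega> g" by (elim exE conjE) simp
  obtain w where w: "wfw m w" "map (ev \<omega>) w = ss" using lift_word ss(1) by blast
  have "\<forall>l\<in>set w. gweight (ev \<omega> l) = wt l" using gweight_eq[OF assms(1,2)] w(1) unfolding wfw_def by blast
  then have e: "map (\<lambda>l. gweight (ev \<omega> l)) w = map wt w" by (metis map_eq_conv)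
  have "sum_list (map gweight ss) = sum_list (map (\<lambda>l. gweight (ev \<omega> l)) w)" unfolding w(2)[symmetric] by (simp add: comp_def)
  then have "wtw w = sum_list (map gweight ss)" unfolding wtw_def e by simp
  moreover have "evw \<omega> w = g" using w(2) ss(2) unfolding evw_def by simp
  ultimately show ?thesis using w(1) ss(3) by (intro exI[where x=w]) simp
qed



definition pt :: "letter \<Rightarrow> letter" where "pt l = (case l of LA _ \<Rightarrow> LA 0 | LB _ \<Rightarrow> LB bzero)"

fun flipl where "flipl (LA _) = LB bzero" | "flipl (LB _) = LA 0"

fun altpat :: "letter \<Rightarrow> nat \<Rightarrow> letter list" where
  "altpat s 0 = []" | "altpat s (Suc j) = s # altpat (flipl s) j"

fun addhd :: "nat \<Rightarrow> letter list \<Rightarrow> letter list" where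
  "addhd a (LA e # r) = LA ((a + e) mod 3) # r" | "addhd a r = LA (a mod 3) # r"

fun cmpw :: "letter list \<Rightarrow> letter list" where
  "cmpw [] = [LA 0]"
| "cmpw (LA a # w) = addhd a (cmpw w)"
| "cmpw (LB b # w) = (if b = bzero then cmpw w else LA 0 # LB b # cmpw w)"

definition nz :: "letter list \<Rightarrow> bool" where "nz w = (\<forall>l\<in>set w. l \<noteq> LB bzero)"

lemma cmpw_hd: "\<exists>e r. cmpw w = LA e # r \<and> e < 3"
  by (induction w rule: cmpw.induct) auto

lemma evw_cmpw:
  assumes "\<forall>i. epi m (\<omega> i)" shows "evw \<omega> (cmpw w) = evw \<omega> w"
proof (induction w rule: cmpw.induct)
  case 1 then show ?case using rot0 rooted_id by simp
next
  case (2 a w)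
  obtain e r where er: "cmpw w = LA e # r" "e < 3" using cmpw_hd by blast
  have "evw \<omega> (cmpw (LA a # w)) = rooted (rot ((a + e) mod 3)) \<circ> evw \<omega> r" using er by simp
  also have "\<dots> = rooted (rot a) \<circ> (rooted (rot e) \<circ> evw \<omega> r)"
    by (simp add: rot_mod rooted_comp rot_comp[symmetric] o_assoc)
  also have "rooted (rot e) \<circ> evw \<omega> r = evw \<omega> w" using 2 er by (simp add: o_def)
  finally show ?case by simp
next
  case (3 b w) then show ?case using beta_zero[OF assms] by (simp add: rot0 rooted_id)
qed

lemma wfw_cmpw: "wfw m w \<Longrightarrow> wfw m (cmpw w)"
proof (induction w rule: cmpw.induct)
  case 1 then show ?case by (simp add: wfw_def)
next
  case (2 a w)
  obtain e r where er: "cmpw w = LA e # r" "e < 3" using cmpw_hd by blast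
  then show ?case using 2 by (simp add: wfw_def)
next
  case (3 b w) then show ?case by (simp add: wfw_def)
qed

lemma wtw_cmpw: "wtw (cmpw w) = wtw w"
proof (induction w rule: cmpw.induct)
  case (2 a w)
  obtain e r where er: "cmpw w = LA e # r" "e < 3" using cmpw_hd by blast
  then show ?case using 2 by simp
qed auto

lemma nz_cmpw: "nz (cmpw w)"
proof (induction w rule: cmpw.induct)
  case (2 a w)
  obtain e r where er: "cmpw w = LA e # r" "e < 3" using cmpw_hd by blast
  then show ?case using 2 by (simp add: nz_def)
qed (auto simp: nz_def)

lemma pat_cmpw: "map pt (cmpw w) = altpat (LA 0) (2 * wtw w + 1)"
proof (induction w rule: cmpw.induct)
  case 1 then show ?case by (simp add: pt_def)
next
  case (2 a w)
  obtain e r where er: "cmpw w = LA e # r" "e < 3" using cmpw_hd by blast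
  then show ?case using 2 by (simp add: pt_def)
next
  case (3 b w) then show ?case by (simp add: pt_def)
qed

definition pil :: "(nat \<Rightarrow> (nat \<Rightarrow> nat) \<Rightarrow> (nat \<Rightarrow> nat)) \<Rightarrow> nat \<Rightarrow> letter \<Rightarrow> letter" where
  "pil \<omega> k l = (case l of LA a \<Rightarrow> LA a | LB b \<Rightarrow> LB (\<lambda>j. if j < k then hat (\<omega> j) b else 0))"

lemma pil_simps[simp]: "pil \<omega> k (LA a) = LA a"
  "pil \<omega> k (LB b) = LB (\<lambda>j. if j < k then hat (\<omega> j) b else 0)"
  by (simp_all add: pil_def)

lemma tot_pi: "tot (map (pil \<omega> k) w) = tot w"
proof (induction w)
  case (Cons s w) then show ?case by (cases s) auto
qed simp

lemma tot_pi0: "map (pil \<omega> 0) w1 = map (pil \<omega> 0) w2 \<Longrightarrow> tot w1 = tot w2"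
  by (metis tot_pi)

lemma surj3: "y < 3 \<Longrightarrow> \<exists>x<3. (x + t) mod 3 = (y::nat)"
proof (intro exI conjI)
  assume y: "y < 3"
  show "(y + 2 * t) mod 3 < 3" by simp
  have "((y + 2 * t) mod 3 + t) mod 3 = (y + 2 * t + t) mod 3" by (simp add: mod_add_left_eq)
  also have "\<dots> = (y + 3 * t) mod 3" by simp
  also have "\<dots> = y" using y by simp
  finally show "((y + 2 * t) mod 3 + t) mod 3 = y" .
qed

lemma pi_letter:
  assumes "pil \<omega> 0 s1 = pil \<omega> 0 s2"
    "\<forall>y<3. map (pil (shift \<omega>) k) (secl \<omega> s1 y) = map (pil (shift \<omega>) k) (secl \<omega> s2 y)"
  shows "pil \<omega> (Suc k) s1 = pil \<omega> (Suc k) s2"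
proof (cases s1)
  case (LA a) then show ?thesis using assms(1) by (cases s2) auto
next
  case (LB b)
  then obtain b' where b': "s2 = LB b'" using assms(1) by (cases s2) auto
  have h0: "hat (\<omega> 0) b = hat (\<omega> 0) b'" using assms(2)[rule_format, of "0::nat"] LB b' by simp
  have "(\<lambda>j. if j < k then hat (shift \<omega> j) b else 0) = (\<lambda>j. if j < k then hat (shift \<omega> j) b' else 0)"
    using assms(2)[rule_format, of "2::nat"] LB b' by simp
  then have hs: "\<And>j. j < k \<Longrightarrow> hat (\<omega> (Suc j)) b = hat (\<omega> (Suc j)) b'"
    by (metis shift_app)
  have "(\<lambda>j. if j < Suc k then hat (\<omega> j) b else 0) = (\<lambda>j. if j < Suc k then hat (\<omega> j) b' else 0)"
  proof
    fix j show "(if j < Suc k then hat (\<omega> j) b else 0) = (if j < Suc k then hat (\<omega> j) b' else 0)"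
      using h0 hs by (cases j) auto
  qed
  then show ?thesis using LB b' by simp
qed

lemma pi_succ:
  assumes "map (pil \<omega> 0) w1 = map (pil \<omega> 0) w2"
    "\<forall>x<3. map (pil (shift \<omega>) k) (secw \<omega> w1 x) = map (pil (shift \<omega>) k) (secw \<omega> w2 x)"
  shows "map (pil \<omega> (Suc k)) w1 = map (pil \<omega> (Suc k)) w2"
  using assms
proof (induction w1 arbitrary: w2)
  case Nil then show ?case by simp
next
  case (Cons s1 w1)
  obtain s2 w2' where w2: "w2 = s2 # w2'" using Cons.prems(1) by (cases w2) auto
  have p0: "pil \<omega> 0 s1 = pil \<omega> 0 s2" "map (pil \<omega> 0) w1 = map (pil \<omega> 0) w2'"
    using Cons.prems(1) w2 by auto
  have tt: "tot w1 = tot w2'" using tot_pi0[OF p0(2)] .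
  have len: "\<And>y. length (secl \<omega> s1 y) = length (secl \<omega> s2 y)"
    using p0(1) by (cases s1; cases s2) auto
  have split: "map (pil (shift \<omega>) k) (secl \<omega> s1 ((x + tot w1) mod 3)) = map (pil (shift \<omega>) k) (secl \<omega> s2 ((x + tot w1) mod 3))
      \<and> map (pil (shift \<omega>) k) (secw \<omega> w1 x) = map (pil (shift \<omega>) k) (secw \<omega> w2' x)" if x: "x < 3" for x
  proof -
    have "map (pil (shift \<omega>) k) (secl \<omega> s1 ((x + tot w1) mod 3)) @ map (pil (shift \<omega>) k) (secw \<omega> w1 x)
        = map (pil (shift \<omega>) k) (secl \<omega> s2 ((x + tot w1) mod 3)) @ map (pil (shift \<omega>) k) (secw \<omega> w2' x)"
      using Cons.prems(2)[rule_format, OF x] w2 tt by simp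
    then show ?thesis using len by (subst (asm) append_eq_append_conv) auto
  qed
  have "map (pil \<omega> (Suc k)) w1 = map (pil \<omega> (Suc k)) w2'"
    using Cons.IH[OF p0(2)] split by blast
  moreover have "pil \<omega> (Suc k) s1 = pil \<omega> (Suc k) s2"
  proof (rule pi_letter[OF p0(1)], intro allI impI)
    fix y :: nat assume "y < 3"
    then obtain x where "x < 3" "(x + tot w1) mod 3 = y" using surj3 by blast
    then show "map (pil (shift \<omega>) k) (secl \<omega> s1 y) = map (pil (shift \<omega>) k) (secl \<omega> s2 y)"
      using split by blast
  qed
  ultimately show ?case using w2 by simp
qed

definition isLA :: "letter \<Rightarrow> bool" where "isLA l = (\<exists>a. l = LA a)"

definition reduced :: "letter list \<Rightarrow> bool" where
  "reduced w \<longleftrightarrow> (\<forall>u b v c z. w = u @ LB b # v @ LB c # z \<longrightarrow> (\<forall>l\<in>set v. isLA l) \<longrightarrow> tot v mod 3 \<noteq> 0)"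

lemma evw_allLA: "\<forall>l\<in>set v. isLA l \<Longrightarrow> evw \<omega> v = rooted (rot (tot v))"
proof (induction v)
  case Nil then show ?case by (simp only: evw_Nil tot.simps rot0 rooted_id)
next
  case (Cons s v)
  then obtain a where a: "s = LA a" by (auto simp: isLA_def)
  have "rooted (rot a) \<circ> rooted (rot (tot v)) = rooted (rot (a + tot v))"
    by (simp only: rooted_comp[symmetric] rot_comp)
  then show ?case using Cons a by simp
qed

lemma tot_append: "tot (u @ v) = tot u + tot v"
proof (induction u)
  case (Cons s u) then show ?case by (cases s) auto
qed simp

lemma minimal_reduced:
  assumes epis: "\<forall>i. epi m (\<omega> i)" and wf: "wfw m w" and nzw: "nz w"
    and mn: "wtw w = wlen m \<omega> (evw \<omega> w)"
  shows "reduced w"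
  unfolding reduced_def
proof (intro allI impI notI)
  fix u b v c z
  assume w: "w = u @ LB b # v @ LB c # z" and la: "\<forall>l\<in>set v. isLA l" and t0: "tot v mod 3 = 0"
  have bc: "b \<in> B_set m" "c \<in> B_set m" "b \<noteq> bzero" "c \<noteq> bzero"
    using wf nzw w by (auto simp: wfw_def nz_def)
  have ev: "evw \<omega> v = id" using evw_allLA[OF la] t0 rot_mod[of "tot v"] rot0 rooted_id by simp
  let ?w' = "u @ LB (badd b c) # z"
  have "evw \<omega> ?w' = evw \<omega> w"
    using w ev beta_hom[OF epis bc(1,2)] by (simp add: evw_append o_assoc)
  moreover have "wfw m ?w'" using wf w badd_B[OF bc(1,2)] by (auto simp: wfw_def)
  ultimately have "wlen m \<omega> (evw \<omega> w) \<le> wtw ?w'" using wlen_le[OF epis] by metis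
  moreover have "wtw ?w' < wtw w" using w bc by simp
  ultimately show False using mn by simp
qed

lemma sum3: "(\<Sum>x<3. f x) = f 0 + f 1 + f (2::nat)"
proof -
  have "{..<3::nat} = {0,1,2}" by auto
  then show ?thesis by (simp add: add.assoc)
qed

lemma wt_secl: "(\<Sum>x<3. wtw (secl \<omega> s ((x + (t::nat)) mod 3))) = wt s"
proof (cases s)
  case (LA a) then show ?thesis by simp
next
  case (LB b)
  have e: "(x + t) mod 3 = (x + t mod 3) mod 3" for x :: nat by (simp add: mod_add_right_eq)
  have "t mod 3 = 0 \<or> t mod 3 = 1 \<or> t mod 3 = 2" by presburger
  then show ?thesis using LB unfolding sum3 e by auto
qed

lemma wt_secw: "(\<Sum>x<3. wtw (secw \<omega> w x)) = wtw w"
proof (induction w)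
  case Nil then show ?case by simp
next
  case (Cons s w)
  have "(\<Sum>x<3. wtw (secw \<omega> (s # w) x)) = (\<Sum>x<3. wtw (secl \<omega> s ((x + tot w) mod 3))) + (\<Sum>x<3. wtw (secw \<omega> w x))"
    by (simp add: sum.distrib)
  then show ?case using Cons wt_secl by simp
qed

lemma wfw_secw: "\<forall>i. epi m (\<omega> i) \<Longrightarrow> wfw m w \<Longrightarrow> wfw m (secw \<omega> w x)"
proof (induction w)
  case Nil then show ?case by (simp add: wfw_def)
next
  case (Cons s w)
  have "wfw m (secl \<omega> s ((x + tot w) mod 3))"
  proof (cases s)
    case (LB b) then have "b \<in> B_set m" using Cons.prems by (simp add: wfw_def)
    then show ?thesis using LB hat(1) Cons.prems(1) by (auto simp: wfw_def)
  qed (simp add: wfw_def)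
  then show ?case using Cons by (auto simp: wfw_def)
qed

lemma nz_secw: "nz w \<Longrightarrow> nz (secw \<omega> w x)"
proof (induction w)
  case Nil then show ?case by (simp add: nz_def)
next
  case (Cons s w)
  then show ?case by (cases s) (auto simp: nz_def)
qed

lemma hered:
  assumes epis: "\<forall>i. epi m (\<omega> i)" and wf: "wfw m w" and mn: "wtw w = wlen m \<omega> (evw \<omega> w)"
    and inc: "evw \<omega> w \<in> Inc m (Suc k) \<omega>" and x: "x < 3"
  shows "wtw (secw \<omega> w x) = wlen m (shift \<omega>) (evw (shift \<omega>) (secw \<omega> w x))"
    "evw (shift \<omega>) (secw \<omega> w x) \<in> Inc m k (shift \<omega>)"
proof -
  let ?g = "evw \<omega> w"
  have I: "\<forall>x<3. sec ?g x \<in> Inc m k (shift \<omega>)" "(\<Sum>x<3. wlen m (shift \<omega>) (sec ?g x)) = wlen m \<omega> ?g"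
    using inc by auto
  have se: "sec ?g y = evw (shift \<omega>) (secw \<omega> w y)" if "y < 3" for y using sec_evw[OF epis wf that] .
  define f where "f y = wlen m (shift \<omega>) (evw (shift \<omega>) (secw \<omega> w y))" for y
  define h where "h y = wtw (secw \<omega> w y)" for y
  have le: "f y \<le> h y" for y unfolding f_def h_def
    by (rule wlen_le[OF epis_shift[OF epis] wfw_secw[OF epis wf]])
  have "(\<Sum>y<3. f y) = (\<Sum>y<3. h y)"
  proof -
    have "(\<Sum>y<3. f y) = (\<Sum>y<3. wlen m (shift \<omega>) (sec ?g y))" unfolding f_def
      by (rule sum.cong) (auto simp: se)
    also have "\<dots> = wtw w" using I(2) mn by simp
    also have "\<dots> = (\<Sum>y<3. h y)" unfolding h_def by (rule wt_secw[symmetric])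
    finally show ?thesis .
  qed
  then have "f 0 + f 1 + f 2 = h 0 + h 1 + h 2" unfolding sum3 .
  then have "f 0 = h 0 \<and> f 1 = h 1 \<and> f 2 = h 2" using le[of 0] le[of 1] le[of 2] by linarith
  moreover have "x = 0 \<or> x = 1 \<or> x = 2" using x by auto
  ultimately show "wtw (secw \<omega> w x) = wlen m (shift \<omega>) (evw (shift \<omega>) (secw \<omega> w x))"
    unfolding f_def h_def by auto
  show "evw (shift \<omega>) (secw \<omega> w x) \<in> Inc m k (shift \<omega>)" using I(1) x se by auto
qed

fun HR :: "(nat \<Rightarrow> (nat \<Rightarrow> nat) \<Rightarrow> (nat \<Rightarrow> nat)) \<Rightarrow> nat \<Rightarrow> letter list \<Rightarrow> bool" where
  "HR \<omega> 0 w = reduced w"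
| "HR \<omega> (Suc k) w = (reduced w \<and> (\<forall>x<3. HR (shift \<omega>) k (secw \<omega> w x)))"

lemma Inc_HR:
  assumes "\<forall>i. epi m (\<omega> i)" "wfw m w" "nz w" "wtw w = wlen m \<omega> (evw \<omega> w)" "evw \<omega> w \<in> Inc m k \<omega>"
  shows "HR \<omega> k w"
  using assms
proof (induction k arbitrary: \<omega> w)
  case 0 then show ?case using minimal_reduced by simp
next
  case (Suc k)
  have "reduced w" using minimal_reduced Suc.prems by blast
  moreover have "HR (shift \<omega>) k (secw \<omega> w x)" if x: "x < 3" for x
    using Suc.IH[OF epis_shift[OF Suc.prems(1)] wfw_secw[OF Suc.prems(1,2)] nz_secw[OF Suc.prems(3)]
        hered(1)[OF Suc.prems(1,2,4,5) x] hered(2)[OF Suc.prems(1,2,4,5) x]] .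
  ultimately show ?case by simp
qed



fun lboffs :: "letter list \<Rightarrow> nat list" where
  "lboffs [] = []" | "lboffs (LA a # w) = lboffs w" | "lboffs (LB b # w) = (tot w mod 3) # lboffs w"

fun walkl :: "nat \<Rightarrow> nat \<Rightarrow> nat \<Rightarrow> nat list" where
  "walkl t p 0 = []"
| "walkl t p (Suc M) = t # walkl ((t + (if 0 < p then 1 else 2)) mod 3) (p - 1) M"

definition isWalk :: "nat list \<Rightarrow> bool" where
  "isWalk T \<longleftrightarrow> (\<exists>t p. t < 3 \<and> p \<le> length T \<and> T = walkl t p (length T))"

lemma walkl_length[simp]: "length (walkl t p M) = M"
  by (induction M arbitrary: t p) auto

lemma walkl_lt: "t < 3 \<Longrightarrow> x \<in> set (walkl t p M) \<Longrightarrow> x < 3"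
proof (induction M arbitrary: t p)
  case 0 then show ?case by simp
next
  case (Suc M)
  show ?case
  proof (cases "x = t")
    case True then show ?thesis using Suc by simp
  next
    case False
    then have "x \<in> set (walkl ((t + (if 0 < p then 1 else 2)) mod 3) (p - 1) M)" using Suc.prems by simp
    then show ?thesis using Suc.IH[of "(t + (if 0 < p then 1 else 2)) mod 3" "p - 1"] by simp
  qed
qed

lemma lt3: "(n::nat) < 3 \<Longrightarrow> n = 0 \<or> n = 1 \<or> n = 2" by presburger

lemma t1: "(ra::nat) < 3 \<Longrightarrow> rb < 3 \<Longrightarrow> ra \<noteq> 0 \<Longrightarrow> (ra + rb) mod 3 \<noteq> rb"
  by (drule lt3, drule lt3) (elim disjE; simp)
lemma t2: "(x::nat) < 3 \<Longrightarrow> t0 < 3 \<Longrightarrow> (x + t0) mod 3 = 2 \<Longrightarrow> (x + (t0 + 2) mod 3) mod 3 = 1"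
  by (drule lt3, drule lt3) (elim disjE; simp)
lemma t3: "(t::nat) < 3 \<Longrightarrow> t0 < 3 \<Longrightarrow> t \<noteq> t0 \<Longrightarrow> t = (t0 + 1) mod 3 \<or> t = (t0 + 2) mod 3"
  by (drule lt3, drule lt3) (elim disjE; simp)
lemma t4: "(x::nat) < 3 \<Longrightarrow> t0 < 3 \<Longrightarrow> (x + t0) mod 3 = 2 \<Longrightarrow> (x + ((t0 + 2) mod 3 + 1) mod 3) mod 3 = 2"
  by (drule lt3, drule lt3) (elim disjE; simp)

lemma mod3_ne: "(a::nat) mod 3 \<noteq> 0 \<Longrightarrow> (a + b) mod 3 \<noteq> b mod 3"
proof -
  assume a: "a mod 3 \<noteq> 0"
  have e: "(a + b) mod 3 = (a mod 3 + b mod 3) mod 3" by (simp add: mod_add_eq)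
  show ?thesis unfolding e by (rule t1) (use a in simp_all)
qed

lemma reducedD: assumes "reduced w" "w = u @ LB b # v @ LB c # z" "\<forall>l\<in>set v. isLA l" shows "tot v mod 3 \<noteq> 0"
  using assms unfolding reduced_def by blast

lemma reduced_append: "reduced (u @ w) \<Longrightarrow> reduced w"
  unfolding reduced_def by (metis append.assoc)

lemma reduced_Cons: "reduced (s # w) \<Longrightarrow> reduced w"
  using reduced_append[of "[s]"] by simp

lemma secw_append: "secw \<omega> (u @ v) x = secw \<omega> u ((x + tot v) mod 3) @ secw \<omega> v x"
proof (induction u)
  case Nil then show ?case by simp
next
  case (Cons s u)
  have "((x + tot v) mod 3 + tot u) mod 3 = (x + tot (u @ v)) mod 3"
  proof -
    have "((x + tot v) mod 3 + tot u) mod 3 = (x + tot v + tot u) mod 3" by (rule mod_add_left_eq)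
    then show ?thesis by (simp add: tot_append add.commute add.left_commute)
  qed
  then show ?case using Cons by simp
qed

lemma secw_allLA: "\<forall>l\<in>set v. isLA l \<Longrightarrow> secw \<omega> v x = []"
  by (induction v) (auto simp: isLA_def)

lemma first_LB_ex: "lboffs w = h # r \<Longrightarrow> \<exists>v c z. w = v @ LB c # z \<and> (\<forall>l\<in>set v. isLA l) \<and> h = tot z mod 3 \<and> r = lboffs z"
proof (induction w)
  case Nil then show ?case by simp
next
  case (Cons s w)
  show ?case
  proof (cases s)
    case (LA a)
    then obtain v c z where "w = v @ LB c # z" "\<forall>l\<in>set v. isLA l" "h = tot z mod 3" "r = lboffs z"
      using Cons by auto
    then show ?thesis using LA by (intro exI[where x="LA a # v"] exI[where x=c] exI[where x=z]) (auto simp: isLA_def)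
  next
    case (LB b)
    then show ?thesis using Cons.prems by (intro exI[where x="[]"] exI[where x=b] exI[where x=w]) auto
  qed
qed

lemma first_LB:
  assumes "lboffs w = h # r"
  obtains v c z where "w = v @ LB c # z" "\<forall>l\<in>set v. isLA l" "h = tot z mod 3" "lboffs z = r"
  using first_LB_ex[OF assms] by (elim exE conjE) (rule that, assumption+, erule sym)

lemma walk_lemma:
  assumes "reduced w" "\<forall>x<3. reduced (secw \<omega> w x)"
  shows "isWalk (lboffs w)"
  using assms
proof (induction w)
  case Nil then show ?case unfolding isWalk_def by (intro exI[where x=0]) auto
next
  case (Cons s w)
  have rw: "reduced w" using Cons.prems(1) reduced_Cons by blast
  have rs: "\<forall>x<3. reduced (secw \<omega> w x)"
  proof (intro allI impI)
    fix x :: nat assume "x < 3"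
    then have "reduced (secw \<omega> (s # w) x)" using Cons.prems(2) by blast
    then show "reduced (secw \<omega> w x)" by (simp add: reduced_append)
  qed
  have IH: "isWalk (lboffs w)" using Cons.IH[OF rw rs] .
  show ?case
  proof (cases s)
    case (LA a) then show ?thesis using IH by simp
  next
    case (LB b)
    define M where "M = length (lboffs w)"
    obtain t p where tp: "t < 3" "p \<le> M" "lboffs w = walkl t p M"
      using IH unfolding isWalk_def M_def by blast
    define t0 where "t0 = tot w mod 3"
    have t0: "t0 < 3" unfolding t0_def by simp
    have goal: "lboffs (s # w) = t0 # walkl t p M" using LB tp(3) unfolding t0_def by simp
    show ?thesis
    proof (cases M)
      case 0
      then show ?thesis unfolding isWalk_def goal using t0 by (intro exI[where x=t0] exI[where x=0]) auto
    next
      case (Suc M')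
      then have "lboffs w = t # walkl ((t + (if 0 < p then 1 else 2)) mod 3) (p - 1) M'"
        using tp(3) Suc by simp
      then obtain v c z where vcz: "w = v @ LB c # z" "\<forall>l\<in>set v. isLA l" "t = tot z mod 3"
          "lboffs z = walkl ((t + (if 0 < p then 1 else 2)) mod 3) (p - 1) M'"
        by (rule first_LB)
      have "s # w = [] @ LB b # v @ LB c # z" using LB vcz(1) by simp
      from reducedD[OF Cons.prems(1) this vcz(2)] have "tot v mod 3 \<noteq> 0" .
      moreover have "tot w = tot v + tot z" using vcz(1) by (simp add: tot_append)
      ultimately have tne: "t \<noteq> t0" unfolding t0_def vcz(3) using mod3_ne[of "tot v" "tot z"] by simp
      have "t = (t0 + 1) mod 3 \<or> t = (t0 + 2) mod 3" using t3[OF tp(1) t0 tne] .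
      then show ?thesis
      proof
        assume up: "t = (t0 + 1) mod 3"
        have "t0 # walkl t p M = walkl t0 (Suc p) (Suc M)" using up by simp
        moreover have "Suc p \<le> Suc M" using tp(2) by simp
        ultimately show ?thesis unfolding isWalk_def goal using t0 by (intro exI[where x=t0] exI[where x="Suc p"]) auto
      next
        assume dn: "t = (t0 + 2) mod 3"
        have "walkl t p M = walkl t 0 M"
        proof (cases "p = 0 \<or> M' = 0")
          case True then show ?thesis using Suc by (elim disjE) simp_all
        next
          case False
          then obtain M'' where M'': "M' = Suc M''" "0 < p" by (cases M') auto
          then have "lboffs z = ((t + 1) mod 3) # walkl (((t + 1) mod 3 + (if 0 < p - 1 then 1 else 2)) mod 3) (p - 1 - 1) M''"
            using vcz(4) by simp
          then obtain v2 d z2 where v2: "z = v2 @ LB d # z2" "\<forall>l\<in>set v2. isLA l" "(t + 1) mod 3 = tot z2 mod 3"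
            by (rule first_LB)
          obtain x where x: "x < 3" "(x + t0) mod 3 = 2" using surj3[of 2 t0] by auto
          have rx: "reduced (secw \<omega> (s # w) x)" using Cons.prems(2) x(1) by blast
          have e1: "(x + tot w) mod 3 = 2" using x(2) unfolding t0_def by (simp add: mod_add_right_eq)
          have "(x + tot z) mod 3 = (x + t) mod 3" unfolding vcz(3) by (simp add: mod_add_right_eq)
          also have "\<dots> = 1" unfolding dn by (rule t2[OF x(1) t0 x(2)])
          finally have e2: "(x + tot z) mod 3 = 1" .
          have "(x + tot z2) mod 3 = (x + (t + 1) mod 3) mod 3" unfolding v2(3) by (simp add: mod_add_right_eq)
          also have "\<dots> = 2" unfolding dn by (rule t4[OF x(1) t0 x(2)])
          finally have e3: "(x + tot z2) mod 3 = 2" .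
          have "secw \<omega> (s # w) x = LB b # secw \<omega> w x" using LB e1 by simp
          also have "secw \<omega> w x = secw \<omega> v ((x + tot (LB c # z)) mod 3) @ secl \<omega> (LB c) ((x + tot z) mod 3) @ secw \<omega> z x"
            unfolding vcz(1) secw_append by simp
          also have "\<dots> = secw \<omega> z x" using e2 secw_allLA[OF vcz(2)] by simp
          also have "secw \<omega> z x = secw \<omega> v2 ((x + tot (LB d # z2)) mod 3) @ secl \<omega> (LB d) ((x + tot z2) mod 3) @ secw \<omega> z2 x"
            unfolding v2(1) secw_append by simp
          also have "\<dots> = LB d # secw \<omega> z2 x" using e3 secw_allLA[OF v2(2)] by simp
          finally have "secw \<omega> (s # w) x = [] @ LB b # [] @ LB d # secw \<omega> z2 x" by simp
          from reducedD[OF rx this] have False by simp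
          then show ?thesis ..
        qed
        moreover have "t0 # walkl t 0 M = walkl t0 0 (Suc M)" using dn by simp
        ultimately show ?thesis unfolding isWalk_def goal using t0 by (intro exI[where x=t0] exI[where x=0]) auto
      qed
    qed
  qed
qed

definition gsel :: "nat \<Rightarrow> letter list" where
  "gsel y = (if y = 0 then [LA 0] else if y = 2 then [LB bzero] else [])"

definition cpat :: "letter list \<Rightarrow> nat \<Rightarrow> letter list" where
  "cpat w x = concat (map (\<lambda>t. gsel ((x + t) mod 3)) (lboffs w))"

lemma pat_secw: "map pt (secw \<omega> w x) = cpat w x"
proof (induction w)
  case Nil then show ?case by (simp add: cpat_def)
next
  case (Cons s w)
  show ?case
  proof (cases s)
    case (LA a) then show ?thesis using Cons by (simp add: cpat_def)
  next
    case (LB b)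
    have "(x + tot w mod 3) mod 3 = (x + tot w) mod 3" by (simp add: mod_add_right_eq)
    then show ?thesis using Cons LB by (simp add: cpat_def gsel_def pt_def)
  qed
qed

lemma lboffs_pi: "lboffs (map (pil \<omega> k) w) = lboffs w"
proof (induction w)
  case (Cons s w) then show ?case by (cases s) (auto simp: tot_pi)
qed simp

lemma cpat_pi: "cpat (map (pil \<omega> k) w) x = cpat w x"
  by (simp add: cpat_def lboffs_pi)

lemma len_lboffs_pt: "length (lboffs (map pt w)) = length (lboffs w)"
proof (induction w)
  case (Cons s w) then show ?case by (cases s) (auto simp: pt_def)
qed simp

lemma len_lboffs_cpat: "length (lboffs (cpat w x)) \<le> length (lboffs w)"
proof -
  have "length (lboffs (concat (map (\<lambda>t. gsel ((x + t) mod 3)) T))) \<le> length T" for T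
  proof (induction T)
    case (Cons t T) then show ?case by (auto simp: gsel_def)
  qed simp
  then show ?thesis unfolding cpat_def by blast
qed



fun isLBhd :: "letter list \<Rightarrow> bool" where
  "isLBhd (LB b # r) = True" | "isLBhd _ = False"

fun nsr :: "bool \<Rightarrow> letter list \<Rightarrow> nat" where
  "nsr pb [] = 0"
| "nsr pb (LB b # r) = nsr True r"
| "nsr pb (LA a # r) = (if pb \<and> isLBhd r then 0 else 1) + nsr False r"

fun nsv :: "bool \<Rightarrow> letter list \<Rightarrow> nat list" where
  "nsv pb [] = []"
| "nsv pb (LB b # r) = nsv True r"
| "nsv pb (LA a # r) = (if pb \<and> isLBhd r then [] else [a]) @ nsv False r"

lemma nsv_len: "length (nsv pb r) = nsr pb r"
  by (induction pb r rule: nsv.induct) auto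

lemma isLBhd_pt: "isLBhd (map pt r) = isLBhd r"
proof (cases r)
  case (Cons s r') then show ?thesis by (cases s) (auto simp: pt_def)
qed simp

lemma pt_simps[simp]: "pt (LA a) = LA 0" "pt (LB b) = LB bzero" by (simp_all add: pt_def)

lemma nsr_pt: "nsr pb (map pt r) = nsr pb r"
  by (induction pb r rule: nsr.induct) (auto simp: isLBhd_pt)

lemma nsr_mono: "nsr pb r \<le> nsr False r"
proof (cases r)
  case (Cons s r') then show ?thesis by (cases s) auto
qed simp

lemma isLBhd_app: "A \<noteq> [] \<Longrightarrow> isLBhd (A @ B) = isLBhd A"
proof (cases A)
  case (Cons s A') then show ?thesis by (cases s) auto
qed simp

lemma nsr_append: "nsr pb (A @ B) \<le> nsr pb A + nsr False B"
proof (induction A arbitrary: pb)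
  case Nil then show ?case using nsr_mono by simp
next
  case (Cons s A)
  show ?case
  proof (cases s)
    case (LB b) then show ?thesis using Cons by simp
  next
    case (LA a)
    show ?thesis
    proof (cases "A = []")
      case True then show ?thesis using LA by simp
    next
      case False
      then show ?thesis using LA Cons.IH[of False] isLBhd_app[OF False, of B] by simp
    qed
  qed
qed

lemma alt_aux: "nsr True (altpat (LA 0) j) \<le> 1 \<and> (\<forall>pb. nsr pb (altpat (LB bzero) j) \<le> 1)"
proof (induction j)
  case 0 then show ?case by simp
next
  case (Suc j)
  have a: "nsr True (altpat (LA 0) (Suc j)) \<le> 1"
  proof (cases j)
    case 0 then show ?thesis by simp
  next
    case (Suc j') then show ?thesis using Suc.IH by simp
  qed
  then show ?case using Suc.IH by simp
qed

lemma alt_bound: "s = LA 0 \<or> s = LB bzero \<Longrightarrow> nsr pb (altpat s j) \<le> 2"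
proof (elim disjE)
  assume s: "s = LA 0"
  show ?thesis
  proof (cases j)
    case 0 then show ?thesis using s by simp
  next
    case (Suc j')
    have "nsr False (altpat (LB bzero) j') \<le> 1" using alt_aux[of j'] by blast
    then show ?thesis using s Suc by simp
  qed
next
  assume s: "s = LB bzero"
  have "nsr pb (altpat (LB bzero) j) \<le> 1" using alt_aux[of j] by blast
  then show ?thesis using s by simp
qed

definition su :: "nat \<Rightarrow> letter" where "su y = (if y = 0 then LA 0 else LB bzero)"
definition sd :: "nat \<Rightarrow> letter" where "sd y = (if y = 2 then LB bzero else LA 0)"

lemma down_step: "(y::nat) < 3 \<Longrightarrow> \<exists>j'. gsel y @ altpat (sd ((y + 2) mod 3)) j = altpat (sd y) j'"
proof (drule lt3, elim disjE)
  assume "y = 0" then show ?thesis by (intro exI[where x="Suc j"]) (simp add: gsel_def sd_def)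
next
  assume "y = 1" then show ?thesis by (intro exI[where x="j"]) (simp add: gsel_def sd_def)
next
  assume "y = 2" then show ?thesis by (intro exI[where x="Suc j"]) (simp add: gsel_def sd_def)
qed

lemma up_step: "(y::nat) < 3 \<Longrightarrow> \<exists>j'. gsel y @ altpat (su ((y + 1) mod 3)) j = altpat (su y) j'"
proof (drule lt3, elim disjE)
  assume "y = 0" then show ?thesis by (intro exI[where x="Suc j"]) (simp add: gsel_def su_def)
next
  assume "y = 1" then show ?thesis by (intro exI[where x="j"]) (simp add: gsel_def su_def)
next
  assume "y = 2" then show ?thesis by (intro exI[where x="Suc j"]) (simp add: gsel_def su_def)
qed

lemma ar1: "(x::nat) < 3 \<Longrightarrow> t < 3 \<Longrightarrow> (x + (t + 2) mod 3) mod 3 = ((x + t) mod 3 + 2) mod 3"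
  by (drule lt3, drule lt3) (elim disjE; simp)
lemma ar2: "(x::nat) < 3 \<Longrightarrow> t < 3 \<Longrightarrow> (x + (t + 1) mod 3) mod 3 = ((x + t) mod 3 + 1) mod 3"
  by (drule lt3, drule lt3) (elim disjE; simp)

lemma down_alt: "t < 3 \<Longrightarrow> x < 3 \<Longrightarrow>
  \<exists>j. concat (map (\<lambda>t. gsel ((x + t) mod 3)) (walkl t 0 M)) = altpat (sd ((x + t) mod 3)) j"
proof (induction M arbitrary: t)
  case 0 then show ?case by (intro exI[where x=0]) simp
next
  case (Suc M)
  have t': "(t + 2) mod 3 < 3" by simp
  obtain j where j: "concat (map (\<lambda>t. gsel ((x + t) mod 3)) (walkl ((t + 2) mod 3) 0 M))
      = altpat (sd (((x + t) mod 3 + 2) mod 3)) j"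
    using Suc.IH[OF t' Suc.prems(2)] ar1[OF Suc.prems(2,1)] by auto
  obtain j' where "gsel ((x + t) mod 3) @ altpat (sd (((x + t) mod 3 + 2) mod 3)) j = altpat (sd ((x + t) mod 3)) j'"
    using down_step[of "(x + t) mod 3" j] by auto
  then show ?case using j by (intro exI[where x=j']) simp
qed

lemma walk_alt: "t < 3 \<Longrightarrow> x < 3 \<Longrightarrow>
  \<exists>j s' j'. (s' = LA 0 \<or> s' = LB bzero) \<and>
     concat (map (\<lambda>t. gsel ((x + t) mod 3)) (walkl t p M)) = altpat (su ((x + t) mod 3)) j @ altpat s' j'"
proof (induction M arbitrary: t p)
  case 0 then show ?case by (intro exI[where x=0] exI[where x="LA 0"]) simp
next
  case (Suc M)
  show ?case
  proof (cases "p = 0")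
    case True
    obtain j where j: "concat (map (\<lambda>t. gsel ((x + t) mod 3)) (walkl t 0 (Suc M))) = altpat (sd ((x + t) mod 3)) j"
      using down_alt[OF Suc.prems] by blast
    have "sd ((x + t) mod 3) = LA 0 \<or> sd ((x + t) mod 3) = LB bzero" by (simp add: sd_def)
    then show ?thesis using True j by (intro exI[where x=0] exI[where x="sd ((x + t) mod 3)"] exI[where x=j]) simp
  next
    case False
    have t': "(t + 1) mod 3 < 3" by simp
    obtain j s' j' where j: "s' = LA 0 \<or> s' = LB bzero"
      "concat (map (\<lambda>t. gsel ((x + t) mod 3)) (walkl ((t + 1) mod 3) (p - 1) M))
         = altpat (su (((x + t) mod 3 + 1) mod 3)) j @ altpat s' j'"
      using Suc.IH[OF t' Suc.prems(2), of "p - 1"] ar2[OF Suc.prems(2,1)] by auto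
    obtain j'' where j'': "gsel ((x + t) mod 3) @ altpat (su (((x + t) mod 3 + 1) mod 3)) j = altpat (su ((x + t) mod 3)) j''"
      using up_step[of "(x + t) mod 3" j] by auto
    have "concat (map (\<lambda>t. gsel ((x + t) mod 3)) (walkl t p (Suc M)))
        = gsel ((x + t) mod 3) @ concat (map (\<lambda>t. gsel ((x + t) mod 3)) (walkl ((t + 1) mod 3) (p - 1) M))"
      using False by simp
    also have "\<dots> = altpat (su ((x + t) mod 3)) j'' @ altpat s' j'" using j(2) j'' by simp
    finally show ?thesis using j(1) by blast
  qed
qed

lemma cpat_ns: assumes "isWalk (lboffs w)" "x < 3" shows "nsr False (cpat w x) \<le> 4"
proof -
  obtain t p where tp: "t < 3" "lboffs w = walkl t p (length (lboffs w))"
    using assms(1) unfolding isWalk_def by blast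
  obtain j s' j' where j: "s' = LA 0 \<or> s' = LB bzero"
    "cpat w x = altpat (su ((x + t) mod 3)) j @ altpat s' j'"
    using walk_alt[OF tp(1) assms(2), of p "length (lboffs w)"] tp(2) unfolding cpat_def by metis
  have "nsr False (cpat w x) \<le> nsr False (altpat (su ((x + t) mod 3)) j) + nsr False (altpat s' j')"
    unfolding j(2) by (rule nsr_append)
  also have "\<dots> \<le> 2 + 2"
    by (intro add_mono alt_bound) (use j(1) in \<open>auto simp: su_def\<close>)
  finally show ?thesis by simp
qed

definition okv :: "letter list \<Rightarrow> bool" where
  "okv r = (\<forall>l\<in>set r. case l of LA a \<Rightarrow> a < 3 | LB b \<Rightarrow> b = bzero)"

lemma ar3: "(a::nat) < 3 \<Longrightarrow> a' < 3 \<Longrightarrow> (a + u) mod 3 = (a' + u') mod 3 \<Longrightarrow> u mod 3 = u' mod 3 \<Longrightarrow> a = a'"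
proof -
  assume h: "a < 3" "a' < 3" "(a + u) mod 3 = (a' + u') mod 3" "u mod 3 = u' mod 3"
  have e1: "(a + u) mod 3 = (a + u mod 3) mod 3" by (simp add: mod_add_right_eq)
  have e2: "(a' + u') mod 3 = (a' + u mod 3) mod 3" using h(4) by (simp add: mod_add_right_eq)
  have "(a + u mod 3) mod 3 = (a' + u mod 3) mod 3" using h(3) e1 e2 by simp
  moreover have "u mod 3 < 3" by simp
  ultimately show "a = a'" using h(1,2)
    by (drule_tac lt3, drule_tac lt3, drule_tac lt3) (elim disjE; simp)
qed

lemma inj_core:
  "map pt v1 = map pt v2 \<Longrightarrow> lboffs v1 = lboffs v2 \<Longrightarrow> nsv pb v1 = nsv pb v2 \<Longrightarrow>
   (pb \<longrightarrow> tot v1 mod 3 = tot v2 mod 3) \<Longrightarrow> okv v1 \<Longrightarrow> okv v2 \<Longrightarrow> v1 = v2"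
proof (induction v1 arbitrary: v2 pb)
  case Nil then show ?case by simp
next
  case (Cons s v1)
  obtain s2 v2' where v2: "v2 = s2 # v2'" using Cons.prems(1) by (cases v2) auto
  have pv: "pt s = pt s2" "map pt v1 = map pt v2'" using Cons.prems(1) v2 by auto
  have ok: "okv v1" "okv v2'" using Cons.prems(5,6) v2 by (auto simp: okv_def)
  show ?case
  proof (cases s)
    case (LB b)
    then obtain b' where b': "s2 = LB b'" using pv(1) by (cases s2) (auto simp: pt_def)
    have bb: "b = bzero" "b' = bzero" using Cons.prems(5,6) LB b' v2 by (auto simp: okv_def)
    have l: "tot v1 mod 3 = tot v2' mod 3" "lboffs v1 = lboffs v2'" using Cons.prems(2) LB b' v2 by auto
    have "nsv True v1 = nsv True v2'" using Cons.prems(3) LB b' v2 by simp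
    then have "v1 = v2'" using Cons.IH[OF pv(2) l(2) _ _ ok] l(1) by blast
    then show ?thesis using LB b' bb v2 by simp
  next
    case (LA a)
    then obtain a' where a': "s2 = LA a'" using pv(1) by (cases s2) (auto simp: pt_def)
    have aa: "a < 3" "a' < 3" using Cons.prems(5,6) LA a' v2 by (auto simp: okv_def)
    have lb: "lboffs v1 = lboffs v2'" using Cons.prems(2) LA a' v2 by auto
    have hd: "isLBhd v2' = isLBhd v1" using pv(2) isLBhd_pt by metis
    have "a = a' \<and> nsv False v1 = nsv False v2'"
    proof (cases "pb \<and> isLBhd v1")
      case True
      then obtain c v0 where v1: "v1 = LB c # v0" by (cases v1 rule: isLBhd.cases) auto
      obtain c' v0' where v2': "v2' = LB c' # v0'" using True hd by (cases v2' rule: isLBhd.cases) auto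
      have "tot v0 mod 3 = tot v0' mod 3" using lb v1 v2' by simp
      moreover have "(a + tot v0) mod 3 = (a' + tot v0') mod 3"
        using Cons.prems(4) True LA a' v2 v1 v2' by simp
      ultimately have "a = a'" using ar3 aa by blast
      moreover have "nsv False v1 = nsv False v2'" using Cons.prems(3) True hd LA a' v2 by simp
      ultimately show ?thesis by simp
    next
      case False
      then show ?thesis using Cons.prems(3) hd LA a' v2 by auto
    qed
    then have "a = a'" "v1 = v2'" using Cons.IH[OF pv(2) lb _ _ ok] by auto
    then show ?thesis using LA a' v2 by simp
  qed
qed

definition Fam :: "letter list \<Rightarrow> letter list set" where
  "Fam P = {r. map pt r = P \<and> okv r \<and> isWalk (lboffs r)}"

lemma nsv_set: "okv r \<Longrightarrow> set (nsv pb r) \<subseteq> {..<3}"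
proof (induction pb r rule: nsv.induct)
  case (2 pb b r) then show ?case by (simp add: okv_def)
next
  case (3 pb a r) then show ?case by (auto simp: okv_def)
qed simp

lemma walks_card: "finite {T. isWalk T \<and> length T = M} \<and> card {T. isWalk T \<and> length T = M} \<le> 3 * (M + 1)"
proof -
  have sub: "{T. isWalk T \<and> length T = M} \<subseteq> (\<lambda>(t, p). walkl t p M) ` ({..<3} \<times> {..M})"
  proof
    fix T assume "T \<in> {T. isWalk T \<and> length T = M}"
    then obtain t p where "t < 3" "p \<le> M" "T = walkl t p M" "length T = M" unfolding isWalk_def by auto
    then show "T \<in> (\<lambda>(t, p). walkl t p M) ` ({..<3} \<times> {..M})" by force
  qed
  have f: "finite ((\<lambda>(t, p). walkl t p M) ` ({..<3::nat} \<times> {..M}))" by simp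
  have "card ((\<lambda>(t, p). walkl t p M) ` ({..<3::nat} \<times> {..M})) \<le> card ({..<3::nat} \<times> {..M})"
    by (rule card_image_le) simp
  also have "\<dots> = 3 * (M + 1)" by (simp add: card_cartesian_product)
  finally show ?thesis using card_mono[OF f sub] finite_subset[OF sub f] by simp
qed

lemma Fam_card:
  assumes "nsr False P \<le> 4" "length (lboffs P) \<le> n"
  shows "finite (Fam P) \<and> card (Fam P) \<le> 243 * (n + 1)"
proof -
  define f where "f r = (lboffs r, nsv False r)" for r
  define M where "M = length (lboffs P)"
  define W where "W = {T. isWalk T \<and> length T = M}"
  define V where "V = {xs. set xs \<subseteq> {..<3::nat} \<and> length xs = nsr False P}"
  have inj: "inj_on f (Fam P)"
  proof (rule inj_onI)
    fix r1 r2 assume "r1 \<in> Fam P" "r2 \<in> Fam P" "f r1 = f r2"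
    then show "r1 = r2" unfolding Fam_def f_def by (intro inj_core[of r1 r2 False]) auto
  qed
  have img: "f ` Fam P \<subseteq> W \<times> V"
  proof
    fix y assume "y \<in> f ` Fam P"
    then obtain r where r: "r \<in> Fam P" "y = f r" by blast
    have "length (lboffs r) = M" using r(1) len_lboffs_pt[of r] unfolding Fam_def M_def by auto
    then have "lboffs r \<in> W" using r(1) unfolding W_def Fam_def by auto
    moreover have "nsv False r \<in> V" using r(1) nsv_set[of r False] nsv_len[of False r] nsr_pt[of False r]
      unfolding V_def Fam_def by auto
    ultimately show "y \<in> W \<times> V" using r(2) unfolding f_def by auto
  qed
  have fW: "finite W" "card W \<le> 3 * (M + 1)" using walks_card[of M] unfolding W_def by auto
  have fV: "finite V" "card V = 3 ^ nsr False P" unfolding V_def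
    using finite_lists_length_eq[of "{..<3::nat}"] card_lists_length_eq[of "{..<3::nat}"] by auto
  have "card V \<le> 3 ^ 4" unfolding fV(2) using assms(1) by (intro power_increasing) auto
  then have cV: "card V \<le> 81" by simp
  have fWV: "finite (W \<times> V)" using fW fV by simp
  have "finite (f ` Fam P)" using finite_subset[OF img fWV] .
  then have fin: "finite (Fam P)" using finite_imageD[OF _ inj] by blast
  have "card (Fam P) = card (f ` Fam P)" using card_image[OF inj] by simp
  also have "\<dots> \<le> card (W \<times> V)" by (rule card_mono[OF fWV img])
  also have "\<dots> = card W * card V" by (simp add: card_cartesian_product)
  also have "\<dots> \<le> (3 * (M + 1)) * 81" by (intro mult_mono fW(2) cV) auto
  also have "\<dots> \<le> 243 * (n + 1)" using assms(2) unfolding M_def by simp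
  finally show ?thesis using fin by simp
qed



datatype tree = Nd "letter list" "tree list"

fun dataT :: "(nat \<Rightarrow> (nat \<Rightarrow> nat) \<Rightarrow> (nat \<Rightarrow> nat)) \<Rightarrow> nat \<Rightarrow> letter list \<Rightarrow> tree" where
  "dataT \<omega> 0 w = Nd (map (pil \<omega> 0) w) []"
| "dataT \<omega> (Suc L) w = Nd (map (pil \<omega> 0) w) (map (\<lambda>x. dataT (shift \<omega>) L (secw \<omega> w x)) [0, 1, 2])"

lemma dataT_pi: "dataT \<omega> L w1 = dataT \<omega> L w2 \<Longrightarrow> map (pil \<omega> L) w1 = map (pil \<omega> L) w2"
proof (induction L arbitrary: \<omega> w1 w2)
  case 0 then show ?case by simp
next
  case (Suc L)
  have p0: "map (pil \<omega> 0) w1 = map (pil \<omega> 0) w2" using Suc.prems by simp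
  have "\<forall>x<3. map (pil (shift \<omega>) L) (secw \<omega> w1 x) = map (pil (shift \<omega>) L) (secw \<omega> w2 x)"
  proof (intro allI impI)
    fix x :: nat assume x: "x < 3"
    have "dataT (shift \<omega>) L (secw \<omega> w1 x) = dataT (shift \<omega>) L (secw \<omega> w2 x)"
      using Suc.prems x by (drule_tac lt3) (elim disjE; simp)
    then show "map (pil (shift \<omega>) L) (secw \<omega> w1 x) = map (pil (shift \<omega>) L) (secw \<omega> w2 x)"
      by (rule Suc.IH)
  qed
  then show ?case using pi_succ[OF p0] by blast
qed

fun TS :: "nat \<Rightarrow> letter list \<Rightarrow> tree set" where
  "TS 0 P = (\<lambda>r. Nd r []) ` Fam P"
| "TS (Suc L) P = (\<lambda>(r, t0, t1, t2). Nd r [t0, t1, t2]) `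
      (SIGMA r:Fam P. TS L (cpat r 0) \<times> TS L (cpat r 1) \<times> TS L (cpat r 2))"

fun nodes :: "nat \<Rightarrow> nat" where "nodes 0 = 1" | "nodes (Suc L) = 1 + 3 * nodes L"

lemma nodes_eq: "2 * nodes L + 1 = 3 ^ (L + 1)"
  by (induction L) auto

lemma child_ok:
  assumes "r \<in> Fam P" "length (lboffs P) \<le> n" "x < 3"
  shows "nsr False (cpat r x) \<le> 4" "length (lboffs (cpat r x)) \<le> n"
proof -
  have r: "map pt r = P" "isWalk (lboffs r)" using assms(1) unfolding Fam_def by auto
  show "nsr False (cpat r x) \<le> 4" using cpat_ns[OF r(2) assms(3)] .
  have "length (lboffs (cpat r x)) \<le> length (lboffs r)" by (rule len_lboffs_cpat)
  also have "\<dots> = length (lboffs P)" using len_lboffs_pt[of r] r(1) by simp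
  finally show "length (lboffs (cpat r x)) \<le> n" using assms(2) by simp
qed

lemma TS_card:
  "nsr False P \<le> 4 \<Longrightarrow> length (lboffs P) \<le> n \<Longrightarrow>
   finite (TS L P) \<and> card (TS L P) \<le> (243 * (n + 1)) ^ nodes L"
proof (induction L arbitrary: P)
  case 0
  have F: "finite (Fam P) \<and> card (Fam P) \<le> 243 * (n + 1)" using Fam_card[OF 0] .
  then have "card (TS 0 P) \<le> 243 * (n + 1)" using card_image_le[of "Fam P" "\<lambda>r. Nd r []"] by simp
  then show ?case using F by simp
next
  case (Suc L)
  define B where "B = 243 * (n + 1)"
  define N where "N = nodes L"
  have F: "finite (Fam P)" "card (Fam P) \<le> B" using Fam_card[OF Suc.prems] unfolding B_def by auto
  have ch: "finite (TS L (cpat r x)) \<and> card (TS L (cpat r x)) \<le> B ^ N" if "r \<in> Fam P" "x < 3" for r x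
    using Suc.IH[OF child_ok[OF that(1) Suc.prems(2) that(2)]] unfolding B_def N_def by simp
  define S where "S = (SIGMA r:Fam P. TS L (cpat r 0) \<times> TS L (cpat r 1) \<times> TS L (cpat r 2))"
  have fin3: "finite (TS L (cpat r 0) \<times> TS L (cpat r 1) \<times> TS L (cpat r 2))" if "r \<in> Fam P" for r
    using ch[OF that, of 0] ch[OF that, of 1] ch[OF that, of 2] by simp
  have c3: "card (TS L (cpat r 0) \<times> TS L (cpat r 1) \<times> TS L (cpat r 2)) \<le> B ^ N * (B ^ N * B ^ N)"
    if "r \<in> Fam P" for r
    unfolding card_cartesian_product
    using ch[OF that, of 0] ch[OF that, of 1] ch[OF that, of 2] by (intro mult_mono) auto
  have fS: "finite S" unfolding S_def by (rule finite_SigmaI[OF F(1) fin3])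
  have "card S = (\<Sum>r\<in>Fam P. card (TS L (cpat r 0) \<times> TS L (cpat r 1) \<times> TS L (cpat r 2)))"
    unfolding S_def using F(1) fin3 by (intro card_SigmaI) auto
  also have "\<dots> \<le> (\<Sum>r\<in>Fam P. B ^ N * (B ^ N * B ^ N))" by (intro sum_mono c3)
  also have "\<dots> = card (Fam P) * (B ^ N * (B ^ N * B ^ N))" by simp
  also have "\<dots> \<le> B * (B ^ N * (B ^ N * B ^ N))" by (intro mult_right_mono F(2)) simp
  also have "\<dots> = B ^ nodes (Suc L)"
  proof -
    have "B ^ N * (B ^ N * B ^ N) = (B ^ N) ^ 3" by (simp add: power3_eq_cube)
    also have "\<dots> = B ^ (N * 3)" by (rule power_mult[symmetric])
    finally have "B * (B ^ N * (B ^ N * B ^ N)) = B ^ Suc (N * 3)" by simp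
    then show ?thesis unfolding N_def by (simp add: mult.commute)
  qed
  finally have cS: "card S \<le> B ^ nodes (Suc L)" .
  have "TS (Suc L) P = (\<lambda>(r, t0, t1, t2). Nd r [t0, t1, t2]) ` S" unfolding S_def by simp
  then have "finite (TS (Suc L) P)" "card (TS (Suc L) P) \<le> card S"
    using fS card_image_le by auto
  then show ?case using cS unfolding B_def by simp
qed

lemma HR_reduced: "HR \<omega> k w \<Longrightarrow> reduced w"
  by (cases k) auto

lemma pt_pil: "map pt (map (pil \<omega> k) w) = map pt w"
proof (induction w)
  case (Cons s w) then show ?case by (cases s) auto
qed simp

lemma okv_pil: "wfw m w \<Longrightarrow> okv (map (pil \<omega> 0) w)"
proof (induction w)
  case Nil then show ?case by (simp add: okv_def)
next
  case (Cons s w)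
  have "wfw m w" using Cons.prems by (simp add: wfw_def)
  then have "okv (map (pil \<omega> 0) w)" using Cons.IH by simp
  moreover have "case pil \<omega> 0 s of LA a \<Rightarrow> a < 3 | LB b \<Rightarrow> b = bzero"
    using Cons.prems by (cases s) (auto simp: wfw_def bzero_def)
  ultimately show ?case by (simp add: okv_def)
qed

lemma root_Fam:
  assumes "HR \<omega> (Suc L) w" "wfw m w"
  shows "map (pil \<omega> 0) w \<in> Fam (map pt w)"
proof -
  have "reduced w" "\<forall>x<3. reduced (secw \<omega> w x)" using assms(1) HR_reduced by auto
  then have "isWalk (lboffs w)" by (rule walk_lemma)
  then show ?thesis unfolding Fam_def using pt_pil okv_pil[OF assms(2)] lboffs_pi by auto
qed

lemma dataT_TS:
  "HR \<omega> (Suc L) w \<Longrightarrow> wfw m w \<Longrightarrow> \<forall>i. epi m (\<omega> i) \<Longrightarrow> dataT \<omega> L w \<in> TS L (map pt w)"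
proof (induction L arbitrary: \<omega> w)
  case 0 then show ?case using root_Fam[OF 0(1,2)] by simp
next
  case (Suc L)
  have rF: "map (pil \<omega> 0) w \<in> Fam (map pt w)" using root_Fam[OF Suc.prems(1,2)] .
  have ch: "dataT (shift \<omega>) L (secw \<omega> w x) \<in> TS L (cpat (map (pil \<omega> 0) w) x)" if x: "x < 3" for x
  proof -
    have "HR (shift \<omega>) (Suc L) (secw \<omega> w x)" using Suc.prems(1) x by simp
    from Suc.IH[OF this wfw_secw[OF Suc.prems(3,2)] epis_shift[OF Suc.prems(3)]]
    show ?thesis by (simp add: pat_secw cpat_pi)
  qed
  have "(map (pil \<omega> 0) w, dataT (shift \<omega>) L (secw \<omega> w 0), dataT (shift \<omega>) L (secw \<omega> w 1), dataT (shift \<omega>) L (secw \<omega> w 2))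
      \<in> (SIGMA r:Fam (map pt w). TS L (cpat r 0) \<times> TS L (cpat r 1) \<times> TS L (cpat r 2))"
    using rF ch[of 0] ch[of 1] ch[of 2] by simp
  then show ?case by (simp add: image_iff)
qed



lemma altpat_SS: "altpat (LA 0) (Suc (Suc j)) = LA 0 # LB bzero # altpat (LA 0) j"
  by simp

lemma lboffs_root: "length (lboffs (altpat (LA 0) (2 * k + 1))) = k"
proof (induction k)
  case 0 then show ?case by simp
next
  case (Suc k)
  have "2 * Suc k + 1 = Suc (Suc (2 * k + 1))" by simp
  then show ?case using Suc by (simp only: altpat_SS) simp
qed

lemma nsr_root: "nsr False (altpat (LA 0) j) \<le> 4"
  using alt_bound[of "LA 0" False j] by simp

lemma b_eq:
  assumes epis: "\<forall>i. epi m (\<omega> i)" and lk: "(\<Inter>i\<in>{0..l}. kern m (\<omega> i)) = {bzero}"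
    and b: "b \<in> B_set m" "b' \<in> B_set m" and eq: "\<forall>j\<le>l. \<omega> j b = \<omega> j b'"
  shows "b = b'"
proof -
  define d where "d = (\<lambda>i. (b i + 2 * b' i) mod 3)"
  have dB: "d \<in> B_set m" using b unfolding d_def B_set_def by auto
  have bd: "badd d b' = b"
  proof
    fix i
    have "((b i + 2 * b' i) mod 3 + b' i) mod 3 = (b i + 2 * b' i + b' i) mod 3" by (rule mod_add_left_eq)
    also have "\<dots> = (b i + 3 * b' i) mod 3" by simp
    also have "\<dots> = b i" using b(1) unfolding B_set_def by simp
    finally show "badd d b' i = b i" unfolding badd_def d_def .
  qed
  have "d \<in> kern m (\<omega> j)" if j: "j \<in> {0..l}" for j
  proof -
    obtain kd where kd: "kd < 3" "\<omega> j d = rot kd" using epiD[OF _ dB] epis by blast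
    obtain k' where k': "k' < 3" "\<omega> j b' = rot k'" using epiD[OF _ b(2)] epis by blast
    have "\<omega> j b = \<omega> j d \<circ> \<omega> j b'" using epi_hom[OF _ dB b(2)] epis bd by metis
    then have "rot k' = rot (kd + k')" using eq j kd k' rot_comp by auto
    then have "k' mod 3 = (kd + k') mod 3" by (simp add: rot_eq_iff)
    then have "kd = 0" using kd(1) k'(1) by (drule_tac lt3, drule_tac lt3) (elim disjE; simp)
    then show ?thesis using kd dB rot0 unfolding kern_def by simp
  qed
  then have "d \<in> (\<Inter>i\<in>{0..l}. kern m (\<omega> i))" by blast
  then have "d = bzero" using lk by blast
  then show ?thesis using bd b(2) unfolding badd_def bzero_def B_set_def by auto
qed

lemma pil_inj:
  assumes epis: "\<forall>i. epi m (\<omega> i)" and lk: "(\<Inter>i\<in>{0..l}. kern m (\<omega> i)) = {bzero}"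
  shows "wfw m w1 \<Longrightarrow> wfw m w2 \<Longrightarrow> map (pil \<omega> (Suc l)) w1 = map (pil \<omega> (Suc l)) w2 \<Longrightarrow> w1 = w2"
proof (induction w1 arbitrary: w2)
  case Nil then show ?case by simp
next
  case (Cons s w1)
  obtain s2 w2' where w2: "w2 = s2 # w2'" using Cons.prems(3) by (cases w2) auto
  have wf: "wfl m s" "wfw m w1" "wfl m s2" "wfw m w2'" using Cons.prems(1,2) w2 by (auto simp: wfw_def)
  have p: "pil \<omega> (Suc l) s = pil \<omega> (Suc l) s2" "map (pil \<omega> (Suc l)) w1 = map (pil \<omega> (Suc l)) w2'"
    using Cons.prems(3) w2 by auto
  have "s = s2"
  proof (cases s)
    case (LA a) then show ?thesis using p(1) by (cases s2) auto
  next
    case (LB b)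
    then obtain b' where b': "s2 = LB b'" using p(1) by (cases s2) auto
    have bb: "b \<in> B_set m" "b' \<in> B_set m" using wf(1,3) LB b' by auto
    have fe: "(\<lambda>j. if j < Suc l then hat (\<omega> j) b else 0) = (\<lambda>j. if j < Suc l then hat (\<omega> j) b' else 0)"
      using p(1) LB b' by simp
    have "\<forall>j\<le>l. \<omega> j b = \<omega> j b'"
    proof (intro allI impI)
      fix j assume "j \<le> l"
      then have "hat (\<omega> j) b = hat (\<omega> j) b'" using fun_cong[OF fe, of j] by simp
      then show "\<omega> j b = \<omega> j b'" using hat(2)[OF _ bb(1)] hat(2)[OF _ bb(2)] epis by metis
    qed
    then show ?thesis using b_eq[OF epis lk bb] LB b' by simp
  qed
  then show ?case using Cons.IH[OF wf(2,4) p(2)] w2 by simp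
qed

theorem mainTheorem2:
  fixes m l :: nat and \<omega> :: "nat \<Rightarrow> (nat \<Rightarrow> nat) \<Rightarrow> (nat \<Rightarrow> nat)"
  assumes epis: "\<forall>i. epi m (\<omega> i)"
    and ker_tail: "\<forall>k. (\<Inter>i\<in>{k..}. kern m (\<omega> i)) = {bzero}"
    and l_ker: "(\<Inter>i\<in>{0..l}. kern m (\<omega> i)) = {bzero}"
    and l_least: "\<forall>l'<l. (\<Inter>i\<in>{0..l'}. kern m (\<omega> i)) \<noteq> {bzero}"
  shows "\<exists>C::nat. \<forall>n::nat. n \<ge> 1 \<longrightarrow>
           finite (Inc_inf_n m \<omega> n) \<and>
           card (Inc_inf_n m \<omega> n) \<le> C * n ^ ((3 ^ (l + 2) - 1) div 2)"
proof -
  define d :: nat where "d = (3 ^ (l + 2) - 1) div 2"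
  have nd: "nodes (Suc l) = d"
    using nodes_eq[of "Suc l"] unfolding d_def by simp
  have ker0: "\<forall>b\<in>B_set m. b \<noteq> bzero \<longrightarrow> (\<exists>i. \<omega> i b \<noteq> id)"
  proof (intro ballI impI)
    fix b assume b: "b \<in> B_set m" "b \<noteq> bzero"
    show "\<exists>i. \<omega> i b \<noteq> id"
    proof (rule ccontr)
      assume "\<not> (\<exists>i. \<omega> i b \<noteq> id)"
      then have "b \<in> (\<Inter>i\<in>{0..}. kern m (\<omega> i))" using b(1) unfolding kern_def by auto
      then show False using ker_tail b(2) by auto
    qed
  qed
  show ?thesis
  proof (intro exI[where x="486 ^ d"] allI impI)
    fix n :: nat assume n: "n \<ge> 1"
    define S where "S = Inc_inf_n m \<omega> n"
    define Q where "Q = (\<lambda>g w. wfw m w \<and> nz w \<and> evw \<omega> w = g \<and> wtw w = wlen m \<omega> g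
                         \<and> map pt w = altpat (LA 0) (2 * n + 1))"
    have ex: "\<exists>w. Q g w" if g: "g \<in> S" for g
    proof -
      have allk: "\<forall>k\<in>{1..}. g \<in> Inc m k \<omega>" using g unfolding S_def Inc_inf_n_def Inc_inf_def by blast
      have "g \<in> Inc m (Suc 0) \<omega>" by (rule bspec[OF allk]) simp
      then have gG: "g \<in> G_om m \<omega>" unfolding Inc.simps by blast
      have wl: "wlen m \<omega> g = n" using g unfolding S_def Inc_inf_n_def by auto
      obtain w0 where w0: "wfw m w0" "evw \<omega> w0 = g" "wtw w0 = wlen m \<omega> g"
        using root_word[OF epis ker0 gG] by blast
      have "Q g (cmpw w0)" unfolding Q_def
        using wfw_cmpw[OF w0(1)] nz_cmpw evw_cmpw[OF epis] w0 wtw_cmpw pat_cmpw wl by simp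
      then show ?thesis by blast
    qed
    define W where "W g = (SOME w. Q g w)" for g
    have QW: "Q g (W g)" if "g \<in> S" for g unfolding W_def using someI_ex[OF ex[OF that]] .
    have HRW: "HR \<omega> (Suc (Suc l)) (W g)" if g: "g \<in> S" for g
    proof -
      have allk: "\<forall>k\<in>{1..}. g \<in> Inc m k \<omega>" using g unfolding S_def Inc_inf_n_def Inc_inf_def by blast
      have "g \<in> Inc m (Suc (Suc l)) \<omega>" by (rule bspec[OF allk]) simp
      then show ?thesis using Inc_HR[OF epis] QW[OF g] unfolding Q_def by metis
    qed
    define P where "P = altpat (LA 0) (2 * n + 1)"
    define \<Phi> where "\<Phi> g = dataT \<omega> (Suc l) (W g)" for g
    have img: "\<Phi> ` S \<subseteq> TS (Suc l) P"
    proof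
      fix y assume "y \<in> \<Phi> ` S"
      then obtain g where g: "g \<in> S" "y = \<Phi> g" by blast
      have "dataT \<omega> (Suc l) (W g) \<in> TS (Suc l) (map pt (W g))"
        using dataT_TS[OF HRW[OF g(1)] _ epis] QW[OF g(1)] unfolding Q_def by blast
      then show "y \<in> TS (Suc l) P" using g QW[OF g(1)] unfolding \<Phi>_def P_def Q_def by simp
    qed
    have inj: "inj_on \<Phi> S"
    proof (rule inj_onI)
      fix g1 g2 assume g: "g1 \<in> S" "g2 \<in> S" "\<Phi> g1 = \<Phi> g2"
      have "map (pil \<omega> (Suc l)) (W g1) = map (pil \<omega> (Suc l)) (W g2)"
        using dataT_pi g(3) unfolding \<Phi>_def by blast
      then have "W g1 = W g2" using pil_inj[OF epis l_ker] QW[OF g(1)] QW[OF g(2)] unfolding Q_def by blast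
      then show "g1 = g2" using QW[OF g(1)] QW[OF g(2)] unfolding Q_def by metis
    qed
    have lb: "length (lboffs (altpat (LA 0) (2 * n + 1))) \<le> n" by (metis lboffs_root order_refl)
    have T: "finite (TS (Suc l) P) \<and> card (TS (Suc l) P) \<le> (243 * (n + 1)) ^ nodes (Suc l)"
      unfolding P_def by (rule TS_card[OF nsr_root lb])
    have fS: "finite S" using finite_imageD[OF finite_subset[OF img] inj] T by blast
    have "card S = card (\<Phi> ` S)" using card_image[OF inj] by simp
    also have "\<dots> \<le> card (TS (Suc l) P)" using card_mono img T by blast
    also have "\<dots> \<le> (243 * (n + 1)) ^ d" using conjunct2[OF T] unfolding nd .
    also have "\<dots> \<le> (486 * n) ^ d" using n by (intro power_mono) auto
    also have "\<dots> = 486 ^ d * n ^ d" by (simp add: power_mult_distrib)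
    finally show "finite (Inc_inf_n m \<omega> n) \<and> card (Inc_inf_n m \<omega> n) \<le> 486 ^ d * n ^ ((3 ^ (l + 2) - 1) div 2)"
      using fS unfolding S_def d_def by simp
  qed
qed


end
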